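(* Let $m,n$ be natural numbers. If the $n$-th term $G(n,m)$ of the Goodstein sequence $G(m)$ is $0$, then $n=2n_1$ for some natural number $n_1$, and $G(k,m)=n-k$ for all $k$ with $n_1\le k<n$.
   Context: For a natural number base $b>1$, the hereditary representation $m\langle b\rangle$ of $m$ is $\sum_{i=0}^{l} a_i b^{i}$ with $0\le a_i<b$, $a_l\ne0$, each exponent itself written in hereditary representation in base $b$, recursively. $m\langle b\rangle''$ is obtained by syntactically replacing every $b$ by $b+1$ in $m\langle b\rangle$. The Goodstein sequence $G(m)=\{m, m''-1, (m''-1)''-1,\dots\}$ starts from $m$ in base $2$; its $n$-th term is $G(n,m)$, with $G(1,m)=m$ in base $2$, $G(k,m)$ written in base $k+1$, and $G(k+1,m)=G(k,m)\langle k+1\rangle''-1$. *)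

theory Defs
  imports Main
begin

text \<open>Value of m<b>'' : write m in hereditary base-b representation
  m = sum_i a_i b^i (0 <= a_i < b, exponents i again hereditary), and replace
  every b by b+1.  The i-th digit is (m div b^i) mod b; for b >= 2 all nonzero
  digits have index i < m, so summing over i < m suffices.\<close>

function hbump :: "nat \<Rightarrow> nat \<Rightarrow> nat" where
  "hbump b m = (\<Sum>i<m. ((m div b ^ i) mod b) * (b + 1) ^ (hbump b i))"
  by pat_completeness auto
termination by (relation "measure snd") simp_all

declare hbump.simps [simp del]

text \<open>Goodstein sequence: goodstein n m = G(n,m), with G(1,m) = m and
  G(k+1,m) = G(k,m)<k+1>'' - 1 (for k >= 1).  The value at n = 0 is a
  meaningless dummy.\<close>

fun goodstein :: "nat \<Rightarrow> nat \<Rightarrow> nat" where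
  "goodstein 0 m = m"
| "goodstein (Suc 0) m = m"
| "goodstein (Suc (Suc k)) m = hbump (Suc (Suc k)) (goodstein (Suc k) m) - 1"

end

theory Submission
  imports Defs
begin

lemma hbump_0: "hbump b 0 = 0"
  unfolding hbump.simps[of b 0] by simp

lemma hbump_small:
  assumes "x < b"
  shows "hbump b x = x"
proof (cases x)
  case 0 then show ?thesis by (simp add: hbump_0)
next
  case (Suc y)
  have "hbump b x = (\<Sum>i<x. ((x div b ^ i) mod b) * (b + 1) ^ (hbump b i))"
    by (rule hbump.simps)
  also have "\<dots> = (\<Sum>i\<in>{0}. ((x div b ^ i) mod b) * (b + 1) ^ (hbump b i))"
  proof (rule sum.mono_neutral_right)
    show "{0} \<subseteq> {..<x}" using Suc by auto
    show "\<forall>i\<in>{..<x} - {0}. x div b ^ i mod b * (b + 1) ^ hbump b i = 0"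
    proof
      fix i assume "i \<in> {..<x} - {0}"
      then have "i \<ge> 1" by auto
      then have "b \<le> b ^ i" using assms
        using power_increasing[of 1 i b] by simp
      then have "x div b ^ i = 0" using assms by simp
      then show "x div b ^ i mod b * (b + 1) ^ hbump b i = 0" by simp
    qed
  qed simp
  also have "\<dots> = x" using assms by (simp add: hbump_0)
  finally show ?thesis .
qed

lemma digit_exists:
  fixes b :: nat
  assumes "b \<ge> 2"
  shows "y \<ge> 1 \<Longrightarrow> \<exists>i. b ^ i \<le> y \<and> y < b ^ Suc i"
proof (induction y rule: less_induct)
  case (less y)
  show ?case
  proof (cases "y < b")
    case True then show ?thesis by (rule_tac x=0 in exI) (use less.prems in auto)
  next
    case False
    then have "y div b \<ge> 1" "y div b < y" using assms by (auto simp: div_less_dividend Suc_le_eq div_greater_zero_iff)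
    then obtain i where i: "b ^ i \<le> y div b" "y div b < b ^ Suc i" using less.IH by blast
    have "b ^ Suc i \<le> y" using i(1) assms
      by (metis dual_order.trans mult_le_mono2 mult.commute div_times_less_eq_dividend power_Suc)
    moreover have "y < b ^ Suc (Suc i)" using i(2) assms
      using div_less_iff_less_mult[of b y "b ^ Suc i"] by (simp add: mult.commute)
    ultimately show ?thesis by blast
  qed
qed

lemma hbump_pos:
  assumes "b \<ge> 2" "y \<ge> 1"
  shows "hbump b y \<ge> 1"
proof -
  obtain i where i: "b ^ i \<le> y" "y < b ^ Suc i" using digit_exists assms by blast
  have iy: "i < y" using i(1) assms
  proof -
    have "i < 2 ^ i" by (rule less_exp)
    also have "\<dots> \<le> b ^ i" using assms by (simp add: power_mono)
    finally show ?thesis using i(1) by simp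
  qed
  have "y div b ^ i < b" using i(2) by (intro less_mult_imp_div_less) (simp add: mult.commute)
  then have d: "(y div b ^ i) mod b = y div b ^ i" by simp
  have "y div b ^ i \<ge> 1" using i assms
    by (simp add: Suc_le_eq div_greater_zero_iff)
  then have "1 \<le> ((y div b ^ i) mod b) * (b + 1) ^ (hbump b i)" using d by simp
  also have "\<dots> \<le> (\<Sum>j<y. ((y div b ^ j) mod b) * (b + 1) ^ (hbump b j))"
    by (rule member_le_sum) (use iy in auto)
  also have "\<dots> = hbump b y" by (rule hbump.simps[symmetric])
  finally show ?thesis .
qed

lemma hbump_big:
  assumes "b \<ge> 2" "x \<ge> b"
  shows "hbump b x \<ge> b + 1"
proof -
  have "x \<ge> 1" using assms by simp
  then obtain i where i: "b ^ i \<le> x" "x < b ^ Suc i" using digit_exists assms(1) by blast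
  have i1: "i \<ge> 1"
  proof (rule ccontr)
    assume "\<not> i \<ge> 1" then have "i = 0" by simp
    then show False using i assms by simp
  qed
  have iy: "i < x"
  proof -
    have "i < 2 ^ i" by (rule less_exp)
    also have "\<dots> \<le> b ^ i" using assms by (simp add: power_mono)
    finally show ?thesis using i(1) by simp
  qed
  have "x div b ^ i < b" using i(2) by (intro less_mult_imp_div_less) (simp add: mult.commute)
  then have d: "(x div b ^ i) mod b = x div b ^ i" by simp
  have d1: "x div b ^ i \<ge> 1" using i assms
    by (simp add: Suc_le_eq div_greater_zero_iff)
  have hi: "hbump b i \<ge> 1" using hbump_pos assms(1) i1 by blast
  have "b + 1 \<le> (b + 1) ^ (hbump b i)"
    using power_increasing[OF hi, of "b + 1"] by simp
  also have "\<dots> \<le> ((x div b ^ i) mod b) * (b + 1) ^ (hbump b i)" using d d1 by simp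
  also have "\<dots> \<le> (\<Sum>j<x. ((x div b ^ j) mod b) * (b + 1) ^ (hbump b j))"
    by (rule member_le_sum) (use iy in auto)
  also have "\<dots> = hbump b x" by (rule hbump.simps[symmetric])
  finally show ?thesis .
qed

lemma gs_step: "k \<ge> 1 \<Longrightarrow> goodstein (Suc k) m = hbump (Suc k) (goodstein k m) - 1"
  by (cases k) auto

lemma gs_small: "k \<ge> 1 \<Longrightarrow> goodstein k m \<le> k \<Longrightarrow> goodstein (Suc k) m = goodstein k m - 1"
  by (simp add: gs_step hbump_small)

lemma gs_big: "k \<ge> 1 \<Longrightarrow> goodstein k m > k \<Longrightarrow> goodstein (Suc k) m \<ge> Suc k"
  using hbump_big[of "Suc k" "goodstein k m"] by (simp add: gs_step)

theorem corollary6p1: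
  fixes m n :: nat
  assumes "1 \<le> m" and "1 \<le> n"
    and "goodstein n m = 0"
    and "\<forall>k. 1 \<le> k \<and> k < n \<longrightarrow> goodstein k m \<noteq> 0"
  shows "\<exists>n1. n = 2 * n1 \<and> (\<forall>k. n1 \<le> k \<and> k < n \<longrightarrow> goodstein k m = n - k)"
proof -
  define P where "P k \<longleftrightarrow> 1 \<le> k \<and> goodstein k m \<le> k" for k
  have Pn: "P n" using assms by (simp add: P_def)
  define k0 where "k0 = (LEAST k. P k)"
  have Pk0: "P k0" unfolding k0_def by (rule LeastI[of P n]) (rule Pn)
  have k0n: "k0 \<le> n" unfolding k0_def by (rule Least_le) (rule Pn)
  have k01: "k0 \<ge> 1" and gk0le: "goodstein k0 m \<le> k0" using Pk0 by (auto simp: P_def)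
  have gk0ge: "goodstein k0 m \<ge> k0"
  proof (cases "k0 = 1")
    case True then show ?thesis using assms(1) by simp
  next
    case False
    then obtain j where j: "k0 = Suc j" "j \<ge> 1" using k01 by (cases k0) auto
    have "\<not> P j" unfolding k0_def using j(1) k0_def not_less_Least[of j P] by simp
    then have "goodstein j m > j" using j by (simp add: P_def)
    then show ?thesis using gs_big[OF j(2)] j by simp
  qed
  have desc: "j \<le> k0 \<Longrightarrow> goodstein (k0 + j) m = k0 - j" for j
  proof (induction j)
    case 0 then show ?case using gk0le gk0ge by simp
  next
    case (Suc j)
    then have "goodstein (k0 + j) m = k0 - j" by simp
    moreover have "goodstein (Suc (k0 + j)) m = goodstein (k0 + j) m - 1"
      using gs_small[of "k0 + j" m] k01 calculation by simp
    ultimately show ?case by simp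
  qed
  have n2: "n = 2 * k0"
  proof -
    obtain j where j: "n = k0 + j" using k0n le_Suc_ex by blast
    show ?thesis
    proof (cases "j \<le> k0")
      case True
      then have "k0 - j = 0" using desc[of j] j assms(3) by simp
      then show ?thesis using True j by simp
    next
      case False
      then have "goodstein (k0 + k0) m = 0" using desc[of k0] by simp
      moreover have "1 \<le> k0 + k0 \<and> k0 + k0 < n" using False j k01 by simp
      ultimately show ?thesis using assms(4) by blast
    qed
  qed
  show ?thesis
  proof (intro exI conjI allI impI)
    show "n = 2 * k0" by (rule n2)
    fix k assume k: "k0 \<le> k \<and> k < n"
    then obtain j where j: "k = k0 + j" using le_Suc_ex by blast
    then have "j \<le> k0" using k n2 by simp
    then show "goodstein k m = n - k" using desc[of j] j n2 by simp
  qed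
qed

end
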